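(* Let $X_1,\dots,X_n$ be i.i.d. positive random variables with mean $\mu$ such that $\alpha=\|X_1-\mu\|_{\psi_1}<+\infty$, and let $\hat X_n=\frac1n\sum_{i=1}^nX_i$. Let $\eta=\alpha/\mu$, and for $\delta\in(0,1)$ let $C_{n,\delta}=2\sqrt{\log(2/\delta)/n}+2\log(2/\delta)/n$. Then with probability at least $1-\delta$, $$\mu\ge \hat X_n\,(1-\eta C_{n,\delta})_+ .$$ Moreover, if $\eta C_{n,\delta}\le \tfrac14$, then with probability at least $1-\delta$, $$\hat X_n(1-\eta C_{n,\delta})_+\le\mu\le \hat X_n\Bigl(1+\tfrac43\eta C_{n,\delta}\Bigr).$$
   Context: For a real random variable $Y$, $\|Y\|_{\psi_1}=\inf\{C>0:\mathbb E[\exp(|Y|/C)]\le2\}$ (sub-exponential / Orlicz norm). $(x)_+=\max\{x,0\}$. *)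

theory Defs
  imports "HOL-Probability.Probability"
begin

text \<open>Sub-exponential (Orlicz psi_1) norm:
  inf {C > 0. E[exp(|Y|/C)] \<le> 2}, with the expectation taken as a
  nonnegative (possibly infinite) integral; value \<infinity> if the set is empty.\<close>
definition psi1_norm :: "'a measure \<Rightarrow> ('a \<Rightarrow> real) \<Rightarrow> ereal" where
  "psi1_norm M Y = Inf {ereal C | C. C > 0 \<and>
      (\<integral>\<^sup>+ x. ennreal (exp (\<bar>Y x\<bar> / C)) \<partial>M) \<le> 2}"

definition C_nd :: "nat \<Rightarrow> real \<Rightarrow> real" where
  "C_nd n \<delta> = 2 * sqrt (ln (2 / \<delta>) / real n) + 2 * ln (2 / \<delta>) / real n"

end

theory Submission
  imports Defs
begin

lemma exp_pt_bound:
  fixes s z :: real assumes s: "0 \<le> s" "s \<le> 1"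
  shows "exp (s * z) \<le> 1 + s * z + s\<^sup>2 * (exp \<bar>z\<bar> - 1)"
proof -
  define f where "f = (\<lambda>x::real. \<lambda>n::nat. inverse (fact (n + 2)) *\<^sub>R (x ^ (n + 2)))"
  have summ: "summable (f x)" for x
  proof -
    have "summable (\<lambda>n. inverse (fact n) *\<^sub>R (x ^ n))" by (rule summable_exp_generic)
    then have "summable (\<lambda>n. inverse (fact (n+2)) *\<^sub>R (x ^ (n+2)))"
      by (rule summable_ignore_initial_segment)
    then show ?thesis by (simp add: f_def)
  qed
  have e1: "exp (s*z) = 1 + s*z + suminf (f (s*z))" unfolding f_def by (rule exp_first_two_terms)
  have e2: "exp \<bar>z\<bar> = 1 + \<bar>z\<bar> + suminf (f \<bar>z\<bar>)" unfolding f_def by (rule exp_first_two_terms)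
  have le: "f (s*z) n \<le> s\<^sup>2 * f \<bar>z\<bar> n" for n
  proof -
    have "(s*z)^(n+2) \<le> \<bar>(s*z)^(n+2)\<bar>" by simp
    also have "\<dots> = s^n * s\<^sup>2 * \<bar>z\<bar>^(n+2)" using s by (simp add: power_abs power_mult_distrib power_add abs_mult power2_eq_square)
    also have "\<dots> \<le> 1 * s\<^sup>2 * \<bar>z\<bar>^(n+2)"
      by (intro mult_right_mono power_le_one) (use s in auto)
    finally have "(s*z)^(n+2) \<le> s\<^sup>2 * \<bar>z\<bar>^(n+2)" by simp
    then show ?thesis unfolding f_def by (simp add: divide_right_mono field_simps)
  qed
  have "suminf (f (s*z)) \<le> suminf (\<lambda>n. s\<^sup>2 * f \<bar>z\<bar> n)"
    by (intro suminf_le le summ summable_mult)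
  also have "\<dots> = s\<^sup>2 * suminf (f \<bar>z\<bar>)" using suminf_mult[OF summ, of "s\<^sup>2" "\<bar>z\<bar>"] by simp
  finally have "suminf (f (s*z)) \<le> s\<^sup>2 * suminf (f \<bar>z\<bar>)" .
  moreover have "s\<^sup>2 * suminf (f \<bar>z\<bar>) \<le> s\<^sup>2 * (exp \<bar>z\<bar> - 1)"
    using e2 by (intro mult_left_mono) auto
  ultimately show ?thesis using e1 by linarith
qed

lemma (in prob_space) mgf_bound:
  fixes Y :: "'a \<Rightarrow> real"
  assumes Ym[measurable]: "Y \<in> borel_measurable M"
    and intY: "integrable M Y" and EY: "expectation Y = 0"
    and a: "a > 0" and psi: "(\<integral>\<^sup>+x. ennreal (exp (\<bar>Y x\<bar> / a)) \<partial>M) \<le> 2"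
    and l: "0 \<le> l" "l \<le> 1/a"
  shows "(\<integral>\<^sup>+x. ennreal (exp (l * Y x)) \<partial>M) \<le> ennreal (exp ((l*a)\<^sup>2))"
proof -
  define s where "s = l * a"
  have s: "0 \<le> s" "s \<le> 1" using l a by (auto simp: s_def field_simps)
  have intE: "integrable M (\<lambda>x. exp (\<bar>Y x\<bar> / a))"
  proof (rule integrableI_bounded)
    show "(\<integral>\<^sup>+x. ennreal (norm (exp (\<bar>Y x\<bar> / a))) \<partial>M) < \<infinity>"
      using psi by (simp add: order_le_less_trans)
  qed simp
  have "ennreal (expectation (\<lambda>x. exp (\<bar>Y x\<bar> / a))) = (\<integral>\<^sup>+x. ennreal (exp (\<bar>Y x\<bar> / a)) \<partial>M)"
    by (rule nn_integral_eq_integral[symmetric]) (use intE in auto)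
  with psi have EE: "expectation (\<lambda>x. exp (\<bar>Y x\<bar> / a)) \<le> 2"
    by (metis ennreal_le_iff ennreal_numeral numeral_le_iff zero_le_numeral ennreal_le_iff2)
  have intL: "integrable M (\<lambda>x. exp (l * Y x))"
  proof (rule Bochner_Integration.integrable_bound[OF intE])
    show "AE x in M. norm (exp (l * Y x)) \<le> norm (exp (\<bar>Y x\<bar> / a))"
    proof (intro AE_I2)
      fix x
      have "l * Y x \<le> l * \<bar>Y x\<bar>" using l by (intro mult_left_mono) auto
      also have "\<dots> \<le> (1/a) * \<bar>Y x\<bar>" using l by (intro mult_right_mono) auto
      finally show "norm (exp (l * Y x)) \<le> norm (exp (\<bar>Y x\<bar> / a))" by simp
    qed
  qed simp
  have pt: "exp (l * Y x) \<le> 1 + (s / a) * Y x + s\<^sup>2 * (exp (\<bar>Y x\<bar> / a) - 1)" for x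
  proof -
    have "exp (s * (Y x / a)) \<le> 1 + s * (Y x / a) + s\<^sup>2 * (exp \<bar>Y x / a\<bar> - 1)"
      by (rule exp_pt_bound[OF s])
    moreover have "s * (Y x / a) = l * Y x" using a by (simp add: s_def)
    ultimately show ?thesis using a by simp
  qed
  have "expectation (\<lambda>x. exp (l * Y x)) \<le>
        expectation (\<lambda>x. 1 + (s / a) * Y x + s\<^sup>2 * (exp (\<bar>Y x\<bar> / a) - 1))"
    by (intro integral_mono intL pt) (use intY intE in auto)
  also have "\<dots> = 1 + (s/a) * expectation Y + s\<^sup>2 * (expectation (\<lambda>x. exp (\<bar>Y x\<bar> / a)) - 1)"
    using intY intE by (simp add: prob_space)
  also have "\<dots> \<le> 1 + s\<^sup>2" using EY EE by (simp add: mult_left_le)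
  also have "\<dots> \<le> exp (s\<^sup>2)" by simp
  finally have *: "expectation (\<lambda>x. exp (l * Y x)) \<le> exp ((l*a)\<^sup>2)" by (simp add: s_def)
  have "(\<integral>\<^sup>+x. ennreal (exp (l * Y x)) \<partial>M) = ennreal (expectation (\<lambda>x. exp (l * Y x)))"
    by (rule nn_integral_eq_integral) (use intL in auto)
  then show ?thesis using * by simp
qed

lemma (in prob_space) chernoff_sum:
  fixes Y :: "nat \<Rightarrow> 'a \<Rightarrow> real"
  assumes fin: "finite I" and indep: "indep_vars (\<lambda>_. borel) Y I"
    and Ym: "\<And>i. i\<in>I \<Longrightarrow> Y i \<in> borel_measurable M"
    and intY: "\<And>i. i\<in>I \<Longrightarrow> integrable M (Y i)"
    and EY: "\<And>i. i\<in>I \<Longrightarrow> expectation (Y i) = 0"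
    and a: "a > 0" and psi: "\<And>i. i\<in>I \<Longrightarrow> (\<integral>\<^sup>+x. ennreal (exp (\<bar>Y i x\<bar> / a)) \<partial>M) \<le> 2"
    and l: "0 < l" "l \<le> 1/a"
  shows "prob {x\<in>space M. \<epsilon> \<le> (\<Sum>i\<in>I. Y i x)} \<le> exp (-l*\<epsilon> + real (card I) * (l*a)\<^sup>2)"
proof -
  have Sm: "(\<lambda>x. \<Sum>i\<in>I. Y i x) \<in> borel_measurable M"
    by (intro borel_measurable_sum Ym)
  have "ennreal (prob {x\<in>space M. \<epsilon> \<le> (\<Sum>i\<in>I. Y i x)}) = emeasure M {x\<in>space M. \<epsilon> \<le> (\<Sum>i\<in>I. Y i x)}"
    by (simp add: emeasure_eq_measure)
  also have "\<dots> \<le> ennreal (exp (-l*\<epsilon>)) * (\<integral>\<^sup>+x. ennreal (exp (l * (\<Sum>i\<in>I. Y i x))) * indicator (space M) x \<partial>M)"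
    by (intro Chernoff_ineq_nn_integral_ge l) (use Sm in auto)
  also have "(\<integral>\<^sup>+x. ennreal (exp (l * (\<Sum>i\<in>I. Y i x))) * indicator (space M) x \<partial>M) =
             (\<integral>\<^sup>+x. (\<Prod>i\<in>I. ennreal (exp (l * Y i x))) \<partial>M)"
    by (intro nn_integral_cong)
       (simp_all add: sum_distrib_left exp_sum fin prod_ennreal)
  also have "\<dots> = (\<Prod>i\<in>I. \<integral>\<^sup>+x. ennreal (exp (l * Y i x)) \<partial>M)"
    by (intro indep_vars_nn_integral fin indep_vars_compose2[OF indep]) auto
  also have "ennreal (exp (-l * \<epsilon>)) * \<dots> \<le>
               ennreal (exp (-l * \<epsilon>)) * (\<Prod>i\<in>I. ennreal (exp ((l*a)\<^sup>2)))"
  proof (intro mult_left_mono prod_mono_ennreal)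
    fix i assume i: "i \<in> I"
    show "(\<integral>\<^sup>+x. ennreal (exp (l * Y i x)) \<partial>M) \<le> ennreal (exp ((l*a)\<^sup>2))"
      by (rule mgf_bound[OF Ym[OF i] intY[OF i] EY[OF i] a psi[OF i]]) (use l in auto)
  qed auto
  also have "\<dots> = ennreal (exp (-l*\<epsilon>) * (\<Prod>i\<in>I. exp ((l*a)\<^sup>2)))"
    by (simp add: ennreal_power ennreal_mult)
  also have "exp (-l*\<epsilon>) * (\<Prod>i\<in>I. exp ((l*a)\<^sup>2)) = exp (-l*\<epsilon> + real (card I) * (l*a)\<^sup>2)"
    by (simp add: exp_add exp_diff exp_minus exp_of_nat_mult[symmetric] field_simps)
  finally show ?thesis
    by (subst (asm) ennreal_le_iff) simp_all
qed
lemma expo_bound: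
  fixes t N :: real
  assumes t: "t > 0" and N: "N > 0"
  defines "u \<equiv> (if t \<le> N then sqrt (t/N) else 1)"
  shows "- u * (N * (2 * sqrt (t/N) + 2*t/N)) + N * u\<^sup>2 \<le> -t"
proof (cases "t \<le> N")
  case True
  have u: "u = sqrt (t/N)" using True by (simp add: u_def)
  have tN: "t/N \<ge> 0" using t N by simp
  have u2: "u\<^sup>2 = t/N" using tN by (simp add: u)
  have u0: "u \<ge> 0" using tN by (simp add: u)
  have "u * (N * (2 * sqrt (t/N) + 2*t/N)) = 2 * N * u\<^sup>2 + u * 2 * t"
    using N by (simp add: u power2_eq_square field_simps)
  also have "\<dots> \<ge> 2 * t" using N u0 t by (simp add: u2)
  finally show ?thesis using u2 N by simp
next
  case False
  have "N * (2 * sqrt (t/N) + 2*t/N) = 2 * N * sqrt (t/N) + 2 * t" using N by (simp add: field_simps)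
  moreover have "N * sqrt (t/N) \<ge> 0" using N t by simp
  ultimately show ?thesis using False by (simp add: u_def)
qed

lemma alg_final:
  fixes h \<mu> \<alpha> C :: real
  assumes h: "h > 0" and mu: "\<mu> > 0" and al: "\<alpha> \<ge> 0" and C: "C > 0"
    and d: "\<bar>h - \<mu>\<bar> \<le> \<alpha> * C"
  shows "h * max 0 (1 - (\<alpha> / \<mu>) * C) \<le> \<mu>"
    and "(\<alpha> / \<mu>) * C \<le> 1/4 \<Longrightarrow> \<mu> \<le> h * (1 + 4/3 * (\<alpha> / \<mu>) * C)"
proof -
  define w where "w = \<alpha> * C"
  have w0: "w \<ge> 0" using al C by (simp add: w_def)
  have eq: "(\<alpha> / \<mu>) * C = w / \<mu>" by (simp add: w_def)
  show "h * max 0 (1 - (\<alpha> / \<mu>) * C) \<le> \<mu>"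
  proof (cases "1 - w/\<mu> \<le> 0")
    case True then show ?thesis using mu unfolding eq by simp
  next
    case False
    have "h * (1 - w/\<mu>) \<le> (\<mu> + w) * (1 - w/\<mu>)"
      using False d by (intro mult_right_mono) (auto simp: w_def)
    also have "\<dots> = \<mu> - w*w/\<mu>" using mu by (simp add: field_simps)
    also have "\<dots> \<le> \<mu>" using mu w0 by simp
    finally show ?thesis using False unfolding eq by simp
  qed
  assume q: "(\<alpha> / \<mu>) * C \<le> 1/4"
  define v where "v = w / \<mu>"
  have v: "0 \<le> v" "v \<le> 1/4" using q w0 mu by (auto simp: v_def w_def)
  have hv: "h \<ge> \<mu> * (1 - v)"
  proof -
    have "\<mu> * (1 - v) = \<mu> - w" using mu by (simp add: v_def field_simps)
    moreover have "h \<ge> \<mu> - w" using d unfolding w_def by linarith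
    ultimately show ?thesis by simp
  qed
  have "\<mu> \<le> \<mu> * ((1 - v) * (1 + 4/3 * v))"
  proof -
    have "(1 - v) * (1 + 4/3 * v) = 1 + v * (1 - 4 * v) / 3" by (simp add: field_simps)
    moreover have "v * (1 - 4 * v) \<ge> 0" using v by simp
    ultimately show ?thesis using mu by simp
  qed
  also have "\<dots> = (\<mu> * (1 - v)) * (1 + 4/3 * v)" by simp
  also have "\<dots> \<le> h * (1 + 4/3 * v)" using hv v by (intro mult_right_mono) auto
  finally show "\<mu> \<le> h * (1 + 4/3 * (\<alpha> / \<mu>) * C)" by (simp add: v_def w_def mult.assoc)
qed

theorem lemma5p1:
  fixes M :: "'a measure" and X :: "nat \<Rightarrow> 'a \<Rightarrow> real"
    and n :: nat and \<mu> \<alpha> \<delta> :: real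
  assumes "prob_space M"
    and rv: "\<And>i. i \<in> {1..n} \<Longrightarrow> X i \<in> borel_measurable M"
    and indep: "prob_space.indep_vars M (\<lambda>_. borel) X {1..n}"
    and ident: "\<And>i. i \<in> {1..n} \<Longrightarrow> distr M borel (X i) = distr M borel (X 1)"
    and pos: "\<And>i x. i \<in> {1..n} \<Longrightarrow> x \<in> space M \<Longrightarrow> X i x > 0"
    and n_pos: "n \<ge> 1"
    and integ: "integrable M (X 1)"
    and mean: "(\<integral>x. X 1 x \<partial>M) = \<mu>"
    and alpha: "psi1_norm M (\<lambda>x. X 1 x - \<mu>) = ereal \<alpha>"
    and delta: "0 < \<delta>" "\<delta> < 1"
  shows "measure M {x \<in> space M.
             \<mu> \<ge> ((\<Sum>i=1..n. X i x) / real n) * max 0 (1 - (\<alpha> / \<mu>) * C_nd n \<delta>)}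
           \<ge> 1 - \<delta>
       \<and> ((\<alpha> / \<mu>) * C_nd n \<delta> \<le> 1/4 \<longrightarrow>
          measure M {x \<in> space M.
             ((\<Sum>i=1..n. X i x) / real n) * max 0 (1 - (\<alpha> / \<mu>) * C_nd n \<delta>) \<le> \<mu>
             \<and> \<mu> \<le> ((\<Sum>i=1..n. X i x) / real n) * (1 + 4/3 * (\<alpha> / \<mu>) * C_nd n \<delta>)}
           \<ge> 1 - \<delta>)"
proof -
  interpret prob_space M by fact
  have one: "1 \<in> {1..n}" using n_pos by auto
  have X1m: "X 1 \<in> borel_measurable M" using rv[OF one] .
  define t where "t = ln (2/\<delta>)"
  define C where "C = C_nd n \<delta>"
  define S where "S = (\<lambda>x. \<Sum>i=1..n. X i x)"
  have t: "t > 0" using delta by (simp add: t_def)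
  have nr: "real n > 0" using n_pos by simp
  have C_eq: "C = 2 * sqrt (t / real n) + 2 * t / real n" by (simp add: C_def C_nd_def t_def)
  have Cpos: "C > 0" using t nr by (simp add: C_eq add_nonneg_pos)
  have expt: "exp (-t) = \<delta>/2" using delta by (simp add: t_def exp_minus)
  have Sm[measurable]: "S \<in> borel_measurable M"
    unfolding S_def by (intro borel_measurable_sum rv) 
  have intX: "integrable M (X i)" if i: "i \<in> {1..n}" for i
  proof -
    have "integrable (distr M borel (X 1)) (\<lambda>y. y)"
      using integrable_distr_eq[OF X1m, of "\<lambda>y. y"] integ by simp
    hence "integrable (distr M borel (X i)) (\<lambda>y. y)" using ident[OF i] by simp
    thus "integrable M (X i)" using integrable_distr_eq[OF rv[OF i], of "\<lambda>y. y"] by simp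
  qed
  have EX: "expectation (X i) = \<mu>" if i: "i \<in> {1..n}" for i
  proof -
    have "expectation (X i) = integral\<^sup>L (distr M borel (X i)) (\<lambda>y. y)"
      using integral_distr[OF rv[OF i], of "\<lambda>y. y"] by simp
    also have "\<dots> = integral\<^sup>L (distr M borel (X 1)) (\<lambda>y. y)" using ident[OF i] by simp
    also have "\<dots> = \<mu>" using integral_distr[OF X1m, of "\<lambda>y. y"] mean by simp
    finally show ?thesis .
  qed
  have psiX: "(\<integral>\<^sup>+x. ennreal (exp (\<bar>X i x - \<mu>\<bar> / c)) \<partial>M) = (\<integral>\<^sup>+x. ennreal (exp (\<bar>X 1 x - \<mu>\<bar> / c)) \<partial>M)"
    if i: "i \<in> {1..n}" for i c
  proof -
    have "(\<integral>\<^sup>+x. ennreal (exp (\<bar>X i x - \<mu>\<bar> / c)) \<partial>M) = (\<integral>\<^sup>+y. ennreal (exp (\<bar>y - \<mu>\<bar> / c)) \<partial>distr M borel (X i))"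
      by (rule nn_integral_distr[symmetric]) (use rv[OF i] in auto)
    also have "\<dots> = (\<integral>\<^sup>+y. ennreal (exp (\<bar>y - \<mu>\<bar> / c)) \<partial>distr M borel (X 1))" using ident[OF i] by simp
    also have "\<dots> = (\<integral>\<^sup>+x. ennreal (exp (\<bar>X 1 x - \<mu>\<bar> / c)) \<partial>M)"
      by (rule nn_integral_distr) (use X1m in auto)
    finally show ?thesis .
  qed
  have mupos: "\<mu> > 0"
  proof -
    have AE0: "AE x in M. 0 \<le> X 1 x" using pos[OF one] by (auto intro!: AE_I2 less_imp_le)
    have "\<mu> \<ge> 0" using integral_nonneg_AE[OF AE0] mean by simp
    moreover have "\<mu> \<noteq> 0"
    proof
      assume "\<mu> = 0"
      then have "AE x in M. X 1 x = 0" using integral_nonneg_eq_0_iff_AE[OF integ AE0] mean by simp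
      moreover have "AE x in M. X 1 x > 0" using pos[OF one] by (auto intro!: AE_I2)
      ultimately have "AE x in M. False" by eventually_elim auto
      then show False by simp
    qed
    ultimately show ?thesis by simp
  qed
  have alpha0: "\<alpha> \<ge> 0"
  proof -
    have "0 \<le> psi1_norm M (\<lambda>x. X 1 x - \<mu>)"
      unfolding psi1_norm_def by (auto intro!: Inf_greatest)
    then show ?thesis using alpha by simp
  qed
  have psi_a: "(\<integral>\<^sup>+x. ennreal (exp (\<bar>X 1 x - \<mu>\<bar> / a)) \<partial>M) \<le> 2" if a: "a > \<alpha>" for a
  proof -
    have "psi1_norm M (\<lambda>x. X 1 x - \<mu>) < ereal a" using alpha a by simp
    then obtain c where c: "c > 0" "(\<integral>\<^sup>+x. ennreal (exp (\<bar>X 1 x - \<mu>\<bar> / c)) \<partial>M) \<le> 2" "c < a"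
      unfolding psi1_norm_def Inf_less_iff by auto
    have "(\<integral>\<^sup>+x. ennreal (exp (\<bar>X 1 x - \<mu>\<bar> / a)) \<partial>M) \<le> (\<integral>\<^sup>+x. ennreal (exp (\<bar>X 1 x - \<mu>\<bar> / c)) \<partial>M)"
      by (intro nn_integral_mono ennreal_leI exp_mono divide_left_mono) (use c in auto)
    with c show ?thesis by simp
  qed

  define D where "D = (\<lambda>x. S x / real n - \<mu>)"
  have Dm[measurable]: "D \<in> borel_measurable M" unfolding D_def by measurable
  have sumeq: "(\<Sum>i\<in>{1..n}. X i x - \<mu>) = S x - real n * \<mu>" for x
    by (simp add: S_def sum_subtractf)
  have sumeq2: "(\<Sum>i\<in>{1..n}. \<mu> - X i x) = real n * \<mu> - S x" for x
    by (simp add: S_def sum_subtractf)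
  have dev: "prob {x\<in>space M. a * C \<le> \<bar>D x\<bar>} \<le> \<delta>" if a: "a > \<alpha>" for a
  proof -
    have a0: "a > 0" using a alpha0 by simp
    define u where "u = (if t \<le> real n then sqrt (t / real n) else 1)"
    define l where "l = u / a"
    have u: "0 < u" "u \<le> 1"
    proof -
      show "0 < u" using t nr by (simp add: u_def)
      show "u \<le> 1"
      proof (cases "t \<le> real n")
        case True
        then have "t / real n \<le> 1" using nr by simp
        then show ?thesis using True by (simp add: u_def)
      qed (simp add: u_def)
    qed
    have l: "0 < l" "l \<le> 1/a" using u a0 by (auto simp: l_def divide_right_mono)
    have la: "l * a = u" using a0 by (simp add: l_def)
    have ex: "-l * (real n * a * C) + real (card {1..n}) * (l*a)\<^sup>2 \<le> -t"
    proof -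
      have "-l * (real n * a * C) + real (card {1..n}) * (l*a)\<^sup>2 = - u * (real n * C) + real n * u\<^sup>2"
        using a0 by (simp add: la l_def)
      also have "\<dots> \<le> -t" unfolding C_eq u_def by (rule expo_bound[OF t nr])
      finally show ?thesis .
    qed
    have P1: "prob {x\<in>space M. real n * a * C \<le> (\<Sum>i\<in>{1..n}. X i x - \<mu>)} \<le> \<delta>/2"
    proof -
      have "prob {x\<in>space M. real n * a * C \<le> (\<Sum>i\<in>{1..n}. X i x - \<mu>)}
            \<le> exp (-l * (real n * a * C) + real (card {1..n}) * (l*a)\<^sup>2)"
      proof (rule chernoff_sum[OF _ _ _ _ _ a0 _ l])
        show "indep_vars (\<lambda>_. borel) (\<lambda>i x. X i x - \<mu>) {1..n}"
          by (intro indep_vars_compose2[OF indep]) auto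
        show "(\<integral>\<^sup>+x. ennreal (exp (\<bar>X i x - \<mu>\<bar> / a)) \<partial>M) \<le> 2" if "i \<in> {1..n}" for i
          using psiX[OF that] psi_a[OF a] by simp
      qed (use rv intX EX in \<open>auto simp: prob_space\<close>)
      also have "\<dots> \<le> exp (-t)" using ex by simp
      finally show ?thesis using expt by simp
    qed
    have P2: "prob {x\<in>space M. real n * a * C \<le> (\<Sum>i\<in>{1..n}. \<mu> - X i x)} \<le> \<delta>/2"
    proof -
      have "prob {x\<in>space M. real n * a * C \<le> (\<Sum>i\<in>{1..n}. \<mu> - X i x)}
            \<le> exp (-l * (real n * a * C) + real (card {1..n}) * (l*a)\<^sup>2)"
      proof (rule chernoff_sum[OF _ _ _ _ _ a0 _ l])
        show "indep_vars (\<lambda>_. borel) (\<lambda>i x. \<mu> - X i x) {1..n}"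
          by (intro indep_vars_compose2[OF indep]) auto
        show "(\<integral>\<^sup>+x. ennreal (exp (\<bar>\<mu> - X i x\<bar> / a)) \<partial>M) \<le> 2" if "i \<in> {1..n}" for i
          using psiX[OF that] psi_a[OF a] by (simp add: abs_minus_commute)
      qed (use rv intX EX in \<open>auto simp: prob_space\<close>)
      also have "\<dots> \<le> exp (-t)" using ex by simp
      finally show ?thesis using expt by simp
    qed
    have sub: "{x\<in>space M. a * C \<le> \<bar>D x\<bar>} \<subseteq>
          {x\<in>space M. real n * a * C \<le> (\<Sum>i\<in>{1..n}. X i x - \<mu>)} \<union>
          {x\<in>space M. real n * a * C \<le> (\<Sum>i\<in>{1..n}. \<mu> - X i x)}"
    proof safe
      fix x assume x: "x \<in> space M" "a * C \<le> \<bar>D x\<bar>"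
        and n2: "\<not> real n * a * C \<le> (\<Sum>i\<in>{1..n}. \<mu> - X i x)"
      have "real n * D x = S x - real n * \<mu>" using nr by (simp add: D_def field_simps)
      then show "real n * a * C \<le> (\<Sum>i\<in>{1..n}. X i x - \<mu>)"
      proof (cases "D x \<ge> 0")
        case True
        then have "a * C \<le> D x" using x by simp
        then have "real n * (a * C) \<le> real n * D x" by (intro mult_left_mono) auto
        with \<open>real n * D x = S x - real n * \<mu>\<close> show ?thesis unfolding sumeq by (simp add: mult.assoc)
      next
        case False
        then have "a * C \<le> - D x" using x by simp
        then have "real n * (a * C) \<le> real n * (- D x)" by (intro mult_left_mono) auto
        with \<open>real n * D x = S x - real n * \<mu>\<close> n2 show ?thesis unfolding sumeq2 by (simp add: mult.assoc)
      qed
    qed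
    have "prob {x\<in>space M. a * C \<le> \<bar>D x\<bar>} \<le>
          prob ({x\<in>space M. real n * a * C \<le> (\<Sum>i\<in>{1..n}. X i x - \<mu>)} \<union>
          {x\<in>space M. real n * a * C \<le> (\<Sum>i\<in>{1..n}. \<mu> - X i x)})"
      by (intro finite_measure_mono[OF sub]) (use rv in auto)
    also have "\<dots> \<le> prob {x\<in>space M. real n * a * C \<le> (\<Sum>i\<in>{1..n}. X i x - \<mu>)} +
          prob {x\<in>space M. real n * a * C \<le> (\<Sum>i\<in>{1..n}. \<mu> - X i x)}"
      by (intro measure_Un_le) (use rv in auto)
    also have "\<dots> \<le> \<delta>" using P1 P2 by simp
    finally show ?thesis .
  qed

  define B where "B = (\<lambda>k::nat. {x\<in>space M. \<bar>D x\<bar> < (\<alpha> + 1 / real (Suc k)) * C})"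
  have Bsets: "range B \<subseteq> sets M" unfolding B_def by auto
  have Bprob: "prob (B k) \<ge> 1 - \<delta>" for k
  proof -
    have "B k = space M - {x\<in>space M. (\<alpha> + 1 / real (Suc k)) * C \<le> \<bar>D x\<bar>}"
      unfolding B_def by auto
    then have "prob (B k) = 1 - prob {x\<in>space M. (\<alpha> + 1 / real (Suc k)) * C \<le> \<bar>D x\<bar>}"
      by (simp add: prob_compl)
    moreover have "prob {x\<in>space M. (\<alpha> + 1 / real (Suc k)) * C \<le> \<bar>D x\<bar>} \<le> \<delta>"
      by (rule dev) simp
    ultimately show ?thesis by simp
  qed
  have Bdec: "decseq B"
  proof (rule decseq_SucI)
    fix k
    have "1 / real (Suc (Suc k)) \<le> 1 / real (Suc k)" by (simp add: frac_le)
    then have "(\<alpha> + 1 / real (Suc (Suc k))) * C \<le> (\<alpha> + 1 / real (Suc k)) * C"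
      using Cpos by (intro mult_right_mono) auto
    then show "B (Suc k) \<subseteq> B k" unfolding B_def by auto
  qed
  define E where "E = {x\<in>space M. \<bar>D x\<bar> \<le> \<alpha> * C}"
  have EB: "E = (\<Inter>k. B k)"
  proof
    show "E \<subseteq> (\<Inter>k. B k)"
    proof
      fix x assume "x \<in> E"
      then have x: "x \<in> space M" "\<bar>D x\<bar> \<le> \<alpha> * C" by (auto simp: E_def)
      have "\<bar>D x\<bar> < (\<alpha> + 1 / real (Suc k)) * C" for k
      proof -
        have "C / real (Suc k) > 0" using Cpos by simp
        then show ?thesis using x by (simp add: distrib_right)
      qed
      then show "x \<in> (\<Inter>k. B k)" using x by (auto simp: B_def)
    qed
    show "(\<Inter>k. B k) \<subseteq> E"
    proof
      fix x assume x: "x \<in> (\<Inter>k. B k)"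
      then have xs: "x \<in> space M" by (auto simp: B_def)
      show "x \<in> E"
      proof (rule ccontr)
        assume "x \<notin> E"
        then have gt: "\<bar>D x\<bar> > \<alpha> * C" using xs by (auto simp: E_def)
        then have "(\<bar>D x\<bar> - \<alpha> * C) / C > 0" using Cpos by simp
        then obtain k where k: "inverse (real (Suc k)) < (\<bar>D x\<bar> - \<alpha> * C) / C"
          using reals_Archimedean by blast
        then have "C / real (Suc k) < \<bar>D x\<bar> - \<alpha> * C" using Cpos
          by (simp add: field_simps)
        moreover have "\<bar>D x\<bar> < (\<alpha> + 1 / real (Suc k)) * C" using x by (auto simp: B_def)
        ultimately show False by (simp add: distrib_right)
      qed
    qed
  qed
  have "(\<lambda>k. prob (B k)) \<longlonglongrightarrow> prob (\<Inter>k. B k)"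
    by (rule finite_Lim_measure_decseq[OF Bsets Bdec])
  then have PE: "prob E \<ge> 1 - \<delta>" unfolding EB
    by (rule LIMSEQ_le_const) (use Bprob in auto)
  have Epos: "S x / real n > 0" if "x \<in> space M" for x
  proof -
    have "S x > 0" unfolding S_def using pos[OF _ that] n_pos
      by (intro sum_pos) auto
    then show ?thesis using nr by simp
  qed
  have Edev: "\<bar>S x / real n - \<mu>\<bar> \<le> \<alpha> * C" if "x \<in> E" for x
    using that by (simp add: E_def D_def)
  have Esp: "E \<subseteq> space M" by (auto simp: E_def)
  show ?thesis
  proof
    have "E \<subseteq> {x \<in> space M. \<mu> \<ge> ((\<Sum>i=1..n. X i x) / real n) * max 0 (1 - (\<alpha> / \<mu>) * C_nd n \<delta>)}"
      using alg_final(1)[OF Epos mupos alpha0 Cpos Edev] Esp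
      by (auto simp: S_def C_def)
    then have "prob E \<le> prob {x \<in> space M. \<mu> \<ge> ((\<Sum>i=1..n. X i x) / real n) * max 0 (1 - (\<alpha> / \<mu>) * C_nd n \<delta>)}"
      by (intro finite_measure_mono) (use Sm in \<open>auto simp: S_def\<close>)
    then show "prob {x \<in> space M. \<mu> \<ge> ((\<Sum>i=1..n. X i x) / real n) * max 0 (1 - (\<alpha> / \<mu>) * C_nd n \<delta>)} \<ge> 1 - \<delta>"
      using PE by simp
  next
    show "(\<alpha> / \<mu>) * C_nd n \<delta> \<le> 1/4 \<longrightarrow>
          measure M {x \<in> space M.
             ((\<Sum>i=1..n. X i x) / real n) * max 0 (1 - (\<alpha> / \<mu>) * C_nd n \<delta>) \<le> \<mu>
             \<and> \<mu> \<le> ((\<Sum>i=1..n. X i x) / real n) * (1 + 4/3 * (\<alpha> / \<mu>) * C_nd n \<delta>)}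
           \<ge> 1 - \<delta>"
    proof
      assume q: "(\<alpha> / \<mu>) * C_nd n \<delta> \<le> 1/4"
      have "E \<subseteq> {x \<in> space M.
             ((\<Sum>i=1..n. X i x) / real n) * max 0 (1 - (\<alpha> / \<mu>) * C_nd n \<delta>) \<le> \<mu>
             \<and> \<mu> \<le> ((\<Sum>i=1..n. X i x) / real n) * (1 + 4/3 * (\<alpha> / \<mu>) * C_nd n \<delta>)}"
        using alg_final(1)[OF Epos mupos alpha0 Cpos Edev] alg_final(2)[OF Epos mupos alpha0 Cpos Edev] q Esp
        by (auto simp: S_def C_def)
      then have "prob E \<le> prob {x \<in> space M.
             ((\<Sum>i=1..n. X i x) / real n) * max 0 (1 - (\<alpha> / \<mu>) * C_nd n \<delta>) \<le> \<mu>
             \<and> \<mu> \<le> ((\<Sum>i=1..n. X i x) / real n) * (1 + 4/3 * (\<alpha> / \<mu>) * C_nd n \<delta>)}"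
        by (intro finite_measure_mono) (use Sm in \<open>auto simp: S_def\<close>)
      then show "prob {x \<in> space M.
             ((\<Sum>i=1..n. X i x) / real n) * max 0 (1 - (\<alpha> / \<mu>) * C_nd n \<delta>) \<le> \<mu>
             \<and> \<mu> \<le> ((\<Sum>i=1..n. X i x) / real n) * (1 + 4/3 * (\<alpha> / \<mu>) * C_nd n \<delta>)} \<ge> 1 - \<delta>"
        using PE by simp
    qed
  qed
qed
end
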